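(* Let $(X,d)$ be a compact metric space and let $f:X\to X$ be a continuous map. Then there is no closed set $J\subseteq CR_f$ such that the poset $(J/E,\preceq)$ is linearly and densely ordered. In particular, the chain components poset $(\mathfrak{C}_f,\preceq)$ is not linearly and densely ordered.
   Context: Let $(X,d)$ be a metric space and $f:X\to X$ a map. For $\varepsilon>0$ and $x,y\in X$, an $\varepsilon$-chain from $x$ to $y$ is a finite sequence $x_0=x,x_1,\dots,x_n=y$ with $n\ge 1$ and $d(f(x_i),x_{i+1})<\varepsilon$ for $i=0,\dots,n-1$. Write $x\,\mathcal{C}\,y$ if for every $\varepsilon>0$ there is an $\varepsilon$-chain from $x$ to $y$. The chain recurrent set is $CR_f=\{x\in X: x\,\mathcal{C}\,x\}$. On $CR_f$ define the equivalence relation $x\,E\,y$ iff $x\,\mathcal{C}\,y$ and $y\,\mathcal{C}\,x$; the equivalence classes are the chain components, and $\mathfrak{C}_f=CR_f/E$. The partial order on chain components is $[x]\preceq[y]$ iff $y\,\mathcal{C}\,x$; $(\mathfrak{C}_f,\preceq)$ is the chain components poset. For $J\subseteq CR_f$, $J/E$ denotes the set of $E$-classes of points of $J$ (i.e. $E$ restricted to $J$), ordered by the same rule $[x]\preceq[y]$ iff $y\,\mathcal{C}\,x$. A poset is densely ordered if it has at least two elements and for every $a<b$ there is $c$ with $a<c<b$ (so a densely ordered poset is infinite). *)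

theory Defs
  imports "HOL-Analysis.Analysis"
begin

definition eps_chain :: "'a::metric_space set \<Rightarrow> ('a \<Rightarrow> 'a) \<Rightarrow> real \<Rightarrow> 'a \<Rightarrow> 'a \<Rightarrow> bool" where
  "eps_chain X f e x y \<longleftrightarrow>
     (\<exists>n::nat. \<exists>xs::nat \<Rightarrow> 'a. n \<ge> 1 \<and> xs 0 = x \<and> xs n = y \<and> (\<forall>i\<le>n. xs i \<in> X) \<and>
        (\<forall>i<n. dist (f (xs i)) (xs (Suc i)) < e))"

definition chain_rel :: "'a::metric_space set \<Rightarrow> ('a \<Rightarrow> 'a) \<Rightarrow> 'a \<Rightarrow> 'a \<Rightarrow> bool" where
  "chain_rel X f x y \<longleftrightarrow> (\<forall>e>0. eps_chain X f e x y)"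

definition chain_recurrent_set :: "'a::metric_space set \<Rightarrow> ('a \<Rightarrow> 'a) \<Rightarrow> 'a set" where
  "chain_recurrent_set X f = {x \<in> X. chain_rel X f x x}"

definition chainE :: "'a::metric_space set \<Rightarrow> ('a \<Rightarrow> 'a) \<Rightarrow> ('a \<times> 'a) set" where
  "chainE X f = {(x, y). x \<in> chain_recurrent_set X f \<and> y \<in> chain_recurrent_set X f \<and>
                      chain_rel X f x y \<and> chain_rel X f y x}"

definition classes_of :: "'a::metric_space set \<Rightarrow> ('a \<Rightarrow> 'a) \<Rightarrow> 'a set \<Rightarrow> 'a set set" where
  "classes_of X f J = J // (chainE X f \<inter> (J \<times> J))"

definition class_le :: "'a::metric_space set \<Rightarrow> ('a \<Rightarrow> 'a) \<Rightarrow> 'a set \<Rightarrow> 'a set \<Rightarrow> bool" where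
  "class_le X f A B \<longleftrightarrow> (\<exists>x\<in>A. \<exists>y\<in>B. chain_rel X f y x)"

definition linear_dense_order :: "'b set \<Rightarrow> ('b \<Rightarrow> 'b \<Rightarrow> bool) \<Rightarrow> bool" where
  "linear_dense_order P le \<longleftrightarrow>
     (\<forall>a\<in>P. le a a) \<and>
     (\<forall>a\<in>P. \<forall>b\<in>P. le a b \<and> le b a \<longrightarrow> a = b) \<and>
     (\<forall>a\<in>P. \<forall>b\<in>P. \<forall>c\<in>P. le a b \<and> le b c \<longrightarrow> le a c) \<and>
     (\<forall>a\<in>P. \<forall>b\<in>P. le a b \<or> le b a) \<and>
     (\<exists>a\<in>P. \<exists>b\<in>P. a \<noteq> b) \<and>
     (\<forall>a\<in>P. \<forall>b\<in>P. le a b \<and> a \<noteq> b \<longrightarrow> (\<exists>c\<in>P. le a c \<and> a \<noteq> c \<and> le c b \<and> c \<noteq> b))"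

end

theory Submission
  imports Defs
begin


lemma eps_chain_mem: "eps_chain X f e x y \<Longrightarrow> x \<in> X \<and> y \<in> X"
  unfolding eps_chain_def by (metis order_refl le_numeral_extra(3) zero_le)

lemma eps_chain_mono: "eps_chain X f e x y \<Longrightarrow> e \<le> e' \<Longrightarrow> eps_chain X f e' x y"
proof -
  assume a: "eps_chain X f e x y" "e \<le> e'"
  then obtain n xs where A: "n \<ge> 1" "xs 0 = x" "xs n = y" "\<forall>i\<le>n. xs i \<in> X"
    "\<forall>i<n. dist (f (xs i)) (xs (Suc i)) < e" unfolding eps_chain_def by blast
  then have "\<forall>i<n. dist (f (xs i)) (xs (Suc i)) < e'" using a(2) by force
  then show ?thesis using A unfolding eps_chain_def by blast
qed

lemma eps_chain_trans:
  assumes "eps_chain X f e x y" "eps_chain X f e y z"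
  shows "eps_chain X f e x z"
proof -
  obtain n xs where A: "n \<ge> 1" "xs 0 = x" "xs n = y" "\<forall>i\<le>n. xs i \<in> X"
    "\<forall>i<n. dist (f (xs i)) (xs (Suc i)) < e" using assms(1) unfolding eps_chain_def by blast
  obtain m ys where B: "m \<ge> 1" "ys 0 = y" "ys m = z" "\<forall>i\<le>m. ys i \<in> X"
    "\<forall>i<m. dist (f (ys i)) (ys (Suc i)) < e" using assms(2) unfolding eps_chain_def by blast
  define zs where "zs i = (if i \<le> n then xs i else ys (i - n))" for i
  have "n + m \<ge> 1" "zs 0 = x" "zs (n+m) = z" using A B by (auto simp: zs_def)
  moreover have "\<forall>i\<le>n+m. zs i \<in> X" using A B by (auto simp: zs_def)
  moreover have "\<forall>i<n+m. dist (f (zs i)) (zs (Suc i)) < e"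
  proof (intro allI impI)
    fix i assume i: "i < n + m"
    show "dist (f (zs i)) (zs (Suc i)) < e"
    proof (cases "i < n")
      case True then show ?thesis using A by (auto simp: zs_def)
    next
      case False
      then have "zs i = ys (i - n)" "zs (Suc i) = ys (Suc (i - n))" "i - n < m"
        using A B i by (auto simp: zs_def Suc_diff_le)
      then show ?thesis using B by auto
    qed
  qed
  ultimately show ?thesis unfolding eps_chain_def by blast
qed

lemma eps_chain_start:
  assumes "eps_chain X f e z' p" "z \<in> X" "dist (f z) (f z') + e \<le> e'"
  shows "eps_chain X f e' z p"
proof -
  obtain n xs where A: "n \<ge> 1" "xs 0 = z'" "xs n = p" "\<forall>i\<le>n. xs i \<in> X"
    "\<forall>i<n. dist (f (xs i)) (xs (Suc i)) < e" using assms(1) unfolding eps_chain_def by blast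
  define ys where "ys = xs(0 := z)"
  have "ys 0 = z" "ys n = p" using A by (auto simp: ys_def)
  moreover have "\<forall>i\<le>n. ys i \<in> X" using A assms by (auto simp: ys_def)
  moreover have "\<forall>i<n. dist (f (ys i)) (ys (Suc i)) < e'"
  proof (intro allI impI)
    fix i assume i: "i < n"
    show "dist (f (ys i)) (ys (Suc i)) < e'"
    proof (cases "i = 0")
      case True
      have "dist (f z) (xs 1) \<le> dist (f z) (f z') + dist (f z') (xs 1)" by (rule dist_triangle)
      moreover have "dist (f z') (xs 1) < e" using A i True by (metis One_nat_def)
      ultimately show ?thesis using True assms(3) by (simp add: ys_def)
    next
      case False then show ?thesis using A i assms(3)
        by (auto simp: ys_def) (smt (verit) dist_not_less_zero)
    qed
  qed
  ultimately show ?thesis using A unfolding eps_chain_def by blast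
qed

lemma eps_chain_end:
  assumes "eps_chain X f e x z'" "z \<in> X" "dist z' z + e \<le> e'"
  shows "eps_chain X f e' x z"
proof -
  obtain n xs where A: "n \<ge> 1" "xs 0 = x" "xs n = z'" "\<forall>i\<le>n. xs i \<in> X"
    "\<forall>i<n. dist (f (xs i)) (xs (Suc i)) < e" using assms(1) unfolding eps_chain_def by blast
  define ys where "ys = xs(n := z)"
  have "ys 0 = x" "ys n = z" using A by (auto simp: ys_def)
  moreover have "\<forall>i\<le>n. ys i \<in> X" using A assms by (auto simp: ys_def)
  moreover have "\<forall>i<n. dist (f (ys i)) (ys (Suc i)) < e'"
  proof (intro allI impI)
    fix i assume i: "i < n"
    show "dist (f (ys i)) (ys (Suc i)) < e'"
    proof (cases "Suc i = n")
      case True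
      have "dist (f (xs i)) z \<le> dist (f (xs i)) z' + dist z' z" by (rule dist_triangle)
      moreover have "dist (f (xs i)) z' < e" using A i True by metis
      ultimately show ?thesis using True assms(3) i by (simp add: ys_def)
    next
      case False then show ?thesis using A i assms(3)
        by (auto simp: ys_def) (smt (verit) dist_not_less_zero)
    qed
  qed
  ultimately show ?thesis using A unfolding eps_chain_def by blast
qed

lemma eps_chain_slack:
  assumes "eps_chain X f e x y"
  shows "\<exists>e1<e. eps_chain X f e1 x y"
proof -
  obtain n xs where A: "n \<ge> 1" "xs 0 = x" "xs n = y" "\<forall>i\<le>n. xs i \<in> X"
    "\<forall>i<n. dist (f (xs i)) (xs (Suc i)) < e" using assms(1) unfolding eps_chain_def by blast
  define M where "M = Max ((\<lambda>i. dist (f (xs i)) (xs (Suc i))) ` {..<n})"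
  have fin: "finite ((\<lambda>i. dist (f (xs i)) (xs (Suc i))) ` {..<n})" by simp
  have ne: "(\<lambda>i. dist (f (xs i)) (xs (Suc i))) ` {..<n} \<noteq> {}" using A by (auto simp: lessThan_empty_iff)
  have "M < e" unfolding M_def using Max_in[OF fin ne] A by auto
  moreover have "\<forall>i<n. dist (f (xs i)) (xs (Suc i)) < (M + e)/2"
  proof (intro allI impI)
    fix i assume "i < n"
    then have "dist (f (xs i)) (xs (Suc i)) \<le> M" unfolding M_def using fin by auto
    moreover have "M < (M + e)/2" using \<open>M < e\<close> by (simp add: field_simps)
    ultimately show "dist (f (xs i)) (xs (Suc i)) < (M + e)/2" by linarith
  qed
  ultimately show ?thesis using A unfolding eps_chain_def
    by (intro exI[of _ "(M+e)/2"]) auto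
qed

lemma chain_rel_trans: "chain_rel X f x y \<Longrightarrow> chain_rel X f y z \<Longrightarrow> chain_rel X f x z"
  unfolding chain_rel_def using eps_chain_trans by blast

lemma eps_chain_pos: "eps_chain X f e x y \<Longrightarrow> e > 0"
proof -
  assume "eps_chain X f e x y"
  then obtain n xs where A: "n \<ge> 1" "\<forall>i<n. dist (f (xs i)) (xs (Suc i)) < e"
    unfolding eps_chain_def by blast
  then have "dist (f (xs 0)) (xs (Suc 0)) < e" by auto
  then show ?thesis using zero_le_dist[of "f (xs 0)" "xs (Suc 0)"] by linarith
qed

lemma closedI_approach:
  fixes S :: "'a::metric_space set"
  assumes "\<And>x. \<forall>e>0. \<exists>y\<in>S. dist y x < e \<Longrightarrow> x \<in> S"
  shows "closed S"
proof -
  have "closure S \<subseteq> S"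
  proof
    fix x assume "x \<in> closure S"
    then show "x \<in> S" using assms closure_approachable[of x S] by simp
  qed
  then show ?thesis using closure_subset_eq by auto
qed

lemma chain_rel_mem: "chain_rel X f x y \<Longrightarrow> x \<in> X \<and> y \<in> X"
  unfolding chain_rel_def using eps_chain_mem[of X f 1 x y] by simp

lemma approach_X:
  assumes "compact X" "\<forall>e>0. \<exists>y\<in>S. dist y x < e" "S \<subseteq> X"
  shows "x \<in> X"
proof -
  have "closed X" using assms(1) compact_imp_closed by blast
  moreover have "\<forall>e>0. \<exists>y\<in>X. dist y x < e" using assms(2,3) by blast
  ultimately show ?thesis using closed_approachable[of X x] by simp
qed

lemma cont_at:
  assumes "continuous_on X f" "z \<in> X" "e > 0"
  obtains d where "d > 0" "\<forall>x'\<in>X. dist x' z < d \<longrightarrow> dist (f x') (f z) < e"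
proof -
  have "\<forall>e>0. \<exists>d>0. \<forall>x'\<in>X. dist x' z < d \<longrightarrow> dist (f x') (f z) < e"
    using assms(1,2) unfolding continuous_on_iff by blast
  then show ?thesis using assms(3) that by blast
qed

lemma closed_up:
  assumes "compact X" "continuous_on X f"
  shows "closed {z. chain_rel X f z p}"
proof (rule closedI_approach)
  fix z assume ap: "\<forall>e>0. \<exists>y\<in>{z. chain_rel X f z p}. dist y z < e"
  have zX: "z \<in> X" using approach_X[OF assms(1) ap] chain_rel_mem by blast
  show "z \<in> {z. chain_rel X f z p}" unfolding mem_Collect_eq chain_rel_def
  proof (intro allI impI)
    fix e :: real assume e: "e > 0"
    obtain d where d: "d > 0" "\<forall>x'\<in>X. dist x' z < d \<longrightarrow> dist (f x') (f z) < e/2"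
      using cont_at[OF assms(2) zX, of "e/2"] e by auto
    obtain z' where z': "chain_rel X f z' p" "dist z' z < d" using ap[rule_format, of d] d by auto
    have "z' \<in> X" using z' chain_rel_mem by blast
    then have "dist (f z) (f z') < e/2" using d z' by (simp add: dist_commute)
    then have i: "dist (f z) (f z') + e/2 \<le> e" by linarith
    have "eps_chain X f (e/2) z' p" using z' e unfolding chain_rel_def by simp
    from eps_chain_start[OF this zX i] show "eps_chain X f e z p" .
  qed
qed

lemma closed_down:
  assumes "compact X"
  shows "closed {z. chain_rel X f p z}"
proof (rule closedI_approach)
  fix z assume ap: "\<forall>e>0. \<exists>y\<in>{z. chain_rel X f p z}. dist y z < e"
  have zX: "z \<in> X" using approach_X[OF assms(1) ap] chain_rel_mem by blast
  show "z \<in> {z. chain_rel X f p z}" unfolding mem_Collect_eq chain_rel_def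
  proof (intro allI impI)
    fix e :: real assume e: "e > 0"
    obtain z' where z': "chain_rel X f p z'" "dist z' z < e/2" using ap[rule_format, of "e/2"] e by auto
    have c: "eps_chain X f (e/2) p z'" using z' e unfolding chain_rel_def by simp
    have i: "dist z' z + e/2 \<le> e" using z' by linarith
    from eps_chain_end[OF c zX i] show "eps_chain X f e p z" .
  qed
qed

lemma CR_closed:
  assumes "compact X" "continuous_on X f"
  shows "closed (chain_recurrent_set X f)"
proof (rule closedI_approach)
  fix z assume ap: "\<forall>e>0. \<exists>y\<in>chain_recurrent_set X f. dist y z < e"
  have zX: "z \<in> X" using approach_X[OF assms(1) ap] unfolding chain_recurrent_set_def by blast
  have "chain_rel X f z z" unfolding chain_rel_def
  proof (intro allI impI)
    fix e :: real assume e: "e > 0"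
    obtain d where d: "d > 0" "\<forall>x'\<in>X. dist x' z < d \<longrightarrow> dist (f x') (f z) < e/3"
      using cont_at[OF assms(2) zX, of "e/3"] e by auto
    obtain z' where z': "z' \<in> chain_recurrent_set X f" "dist z' z < min d (e/3)" using d e
      using ap[rule_format, of "min d (e/3)"] by auto
    have z'X: "z' \<in> X" "chain_rel X f z' z'" using z' unfolding chain_recurrent_set_def by auto
    then have "dist (f z) (f z') < e/3" using d z' by (simp add: dist_commute)
    then have i: "dist (f z) (f z') + e/3 \<le> 2*e/3" by linarith
    have "eps_chain X f (e/3) z' z'" using z'X e unfolding chain_rel_def by simp
    from eps_chain_start[OF this zX i] have c: "eps_chain X f (2*e/3) z z'" .
    have i2: "dist z' z + 2*e/3 \<le> e" using z' by linarith
    from eps_chain_end[OF c zX i2] show "eps_chain X f e z z" .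
  qed
  then show "z \<in> chain_recurrent_set X f" using zX unfolding chain_recurrent_set_def by auto
qed

lemma R_closed:
  assumes "compact X" "continuous_on X f" "closed J" "J \<subseteq> chain_recurrent_set X f"
  shows "closed {z\<in>J. eps_chain X f e x z}"
proof (rule closedI_approach)
  fix z assume ap: "\<forall>d0>0. \<exists>y\<in>{z\<in>J. eps_chain X f e x z}. dist y z < d0"
  have zJ: "z \<in> J" using ap closed_approachable[OF assms(3), of z] by auto
  then have zX: "z \<in> X" "chain_rel X f z z" using assms(4) unfolding chain_recurrent_set_def by auto
  show "z \<in> {z\<in>J. eps_chain X f e x z}"
  proof (cases "e > 0")
    case False
    then have "\<not> eps_chain X f e x z'" for z' using eps_chain_pos by blast
    then show ?thesis using ap[rule_format, of 1] by auto
  next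
    case True
    then have c: "eps_chain X f e z z" using zX unfolding chain_rel_def by auto
    then obtain e1 where e1: "e1 < e" "eps_chain X f e1 z z" using eps_chain_slack by blast
    obtain d where d: "d > 0" "\<forall>x'\<in>X. dist x' z < d \<longrightarrow> dist (f x') (f z) < e - e1"
      using cont_at[OF assms(2) zX(1), of "e-e1"] e1 by auto
    obtain z' where z': "z' \<in> J" "eps_chain X f e x z'" "dist z' z < d" using ap[rule_format, of d] d by auto
    have "z' \<in> X" using z' eps_chain_mem by blast
    then have "dist (f z') (f z) < e - e1" using d z' by auto
    then have "eps_chain X f e z' z" using eps_chain_start[OF e1(2) \<open>z' \<in> X\<close>, where e'=e] by (simp add: dist_commute)
    then show ?thesis using eps_chain_trans z' zJ by blast
  qed
qed

lemma R_compl_closed: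
  assumes "closed J" "J \<subseteq> X"
  shows "closed {z\<in>J. \<not> eps_chain X f e x z}"
proof (rule closedI_approach)
  fix z assume ap: "\<forall>d0>0. \<exists>y\<in>{z\<in>J. \<not> eps_chain X f e x z}. dist y z < d0"
  have zJ: "z \<in> J" using ap closed_approachable[OF assms(1), of z] by auto
  show "z \<in> {z\<in>J. \<not> eps_chain X f e x z}"
  proof (rule ccontr)
    assume "z \<notin> {z\<in>J. \<not> eps_chain X f e x z}"
    then have c: "eps_chain X f e x z" using zJ by auto
    then obtain e1 where e1: "e1 < e" "eps_chain X f e1 x z" using eps_chain_slack by blast
    have "e - e1 > 0" using e1 by simp
    then obtain z' where z': "z' \<in> J" "\<not> eps_chain X f e x z'" "dist z' z < e - e1"
      using ap by blast
    have "z' \<in> X" using z' assms(2) by blast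
    then have "eps_chain X f e x z'" using eps_chain_end[OF e1(2) \<open>z' \<in> X\<close>] z'(3)
      by (simp add: dist_commute)
    then show False using z' by blast
  qed
qed



lemma finite_top:
  assumes "finite P" "P \<subseteq> R" "R \<noteq> {}"
    and tot: "\<forall>a\<in>R. \<forall>b\<in>R. Q a b \<or> Q b a"
    and tr: "\<forall>a b c. Q a b \<longrightarrow> Q b c \<longrightarrow> Q a c"
    and rf: "\<forall>a\<in>R. Q a a"
  shows "\<exists>z\<in>R. \<forall>p\<in>P. Q z p"
  using assms(1,2)
proof (induction P rule: finite_induct)
  case empty then show ?case using assms(3) by auto
next
  case (insert q P)
  then obtain z where z: "z \<in> R" "\<forall>p\<in>P. Q z p" by auto
  have q: "q \<in> R" using insert by auto
  show ?case
  proof (cases "Q z q")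
    case True then show ?thesis using z by auto
  next
    case False
    then have "Q q z" using tot z q by blast
    then have "\<forall>p\<in>P. Q q p" using z tr by blast
    then show ?thesis using q rf by blast
  qed
qed

lemma compact_top:
  fixes R :: "'a::metric_space set"
  assumes "compact R" "R \<noteq> {}"
    and tot: "\<forall>a\<in>R. \<forall>b\<in>R. Q a b \<or> Q b a"
    and tr: "\<forall>a b c. Q a b \<longrightarrow> Q b c \<longrightarrow> Q a c"
    and rf: "\<forall>a\<in>R. Q a a"
    and cl: "\<And>p. closed {z. Q z p}"
  shows "\<exists>z\<in>R. \<forall>p\<in>R. Q z p"
proof -
  have "R \<inter> (\<Inter>p\<in>R. {z. Q z p}) \<noteq> {}"
  proof (rule compact_imp_fip_image[OF assms(1)])
    show "closed {z. Q z p}" for p by (rule cl)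
    fix I' assume "finite I'" "I' \<subseteq> R"
    from finite_top[OF this assms(2) tot tr rf] show "R \<inter> (\<Inter>p\<in>I'. {z. Q z p}) \<noteq> {}" by auto
  qed
  then show ?thesis by auto
qed

context
  fixes X :: "'a::metric_space set" and f :: "'a \<Rightarrow> 'a" and J :: "'a set"
  assumes JCR: "J \<subseteq> chain_recurrent_set X f"
begin

abbreviation "rr \<equiv> chainE X f \<inter> (J \<times> J)"

lemma cls_eq: "z \<in> J \<Longrightarrow> rr `` {z} = {w\<in>J. chain_rel X f z w \<and> chain_rel X f w z}"
  using JCR unfolding chainE_def by auto

lemma J_refl: "z \<in> J \<Longrightarrow> chain_rel X f z z"
  using JCR unfolding chain_recurrent_set_def by auto

lemma le_iff: "p \<in> J \<Longrightarrow> q \<in> J \<Longrightarrow> class_le X f (rr``{p}) (rr``{q}) \<longleftrightarrow> chain_rel X f q p"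
proof
  assume p: "p \<in> J" "q \<in> J" and "class_le X f (rr``{p}) (rr``{q})"
  then obtain x y where xy: "x \<in> rr``{p}" "y \<in> rr``{q}" "chain_rel X f y x" unfolding class_le_def by blast
  then have "chain_rel X f q y" "chain_rel X f x p" using cls_eq p by auto
  then show "chain_rel X f q p" using xy(3) chain_rel_trans by metis
next
  assume p: "p \<in> J" "q \<in> J" and "chain_rel X f q p"
  moreover have "p \<in> rr``{p}" "q \<in> rr``{q}" using p cls_eq J_refl by auto
  ultimately show "class_le X f (rr``{p}) (rr``{q})" unfolding class_le_def by blast
qed

lemma eq_iff: "p \<in> J \<Longrightarrow> q \<in> J \<Longrightarrow> rr``{p} = rr``{q} \<longleftrightarrow> chain_rel X f p q \<and> chain_rel X f q p"
proof
  assume p: "p \<in> J" "q \<in> J" and e: "rr``{p} = rr``{q}"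
  have "q \<in> rr``{q}" using p cls_eq J_refl by auto
  then show "chain_rel X f p q \<and> chain_rel X f q p" using e cls_eq p by auto
next
  assume p: "p \<in> J" "q \<in> J" and "chain_rel X f p q \<and> chain_rel X f q p"
  then show "rr``{p} = rr``{q}" unfolding cls_eq[OF p(1)] cls_eq[OF p(2)] using chain_rel_trans by metis
qed

lemma point_facts:
  assumes "linear_dense_order (classes_of X f J) (class_le X f)"
  shows "\<forall>p\<in>J. \<forall>q\<in>J. chain_rel X f p q \<or> chain_rel X f q p"
    and "\<exists>x\<in>J. \<exists>y\<in>J. \<not> chain_rel X f x y"
    and "\<forall>p\<in>J. \<forall>q\<in>J. chain_rel X f q p \<and> \<not> chain_rel X f p q \<longrightarrow>
          (\<exists>w\<in>J. chain_rel X f w p \<and> \<not> chain_rel X f p w \<and> chain_rel X f q w \<and> \<not> chain_rel X f w q)"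
proof -
  have mem: "rr``{p} \<in> classes_of X f J" if "p \<in> J" for p
    unfolding classes_of_def using that by (simp add: quotientI)
  have ex: "\<exists>p\<in>J. c = rr``{p}" if "c \<in> classes_of X f J" for c
    using that unfolding classes_of_def by (auto elim!: quotientE)
  have L4: "\<forall>a\<in>classes_of X f J. \<forall>b\<in>classes_of X f J. class_le X f a b \<or> class_le X f b a"
    and L5: "\<exists>a\<in>classes_of X f J. \<exists>b\<in>classes_of X f J. a \<noteq> b"
    and L6: "\<forall>a\<in>classes_of X f J. \<forall>b\<in>classes_of X f J. class_le X f a b \<and> a \<noteq> b \<longrightarrow> (\<exists>c\<in>classes_of X f J. class_le X f a c \<and> a \<noteq> c \<and> class_le X f c b \<and> c \<noteq> b)"
    using assms unfolding linear_dense_order_def by metis+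
  show "\<forall>p\<in>J. \<forall>q\<in>J. chain_rel X f p q \<or> chain_rel X f q p"
  proof (intro ballI)
    fix p q assume "p \<in> J" "q \<in> J"
    then show "chain_rel X f p q \<or> chain_rel X f q p"
    proof -
      have "class_le X f (rr``{p}) (rr``{q}) \<or> class_le X f (rr``{q}) (rr``{p})"
        using L4 mem[OF \<open>p \<in> J\<close>] mem[OF \<open>q \<in> J\<close>] by blast
      then show ?thesis using le_iff[OF \<open>p \<in> J\<close> \<open>q \<in> J\<close>] le_iff[OF \<open>q \<in> J\<close> \<open>p \<in> J\<close>] by blast
    qed
  qed
  obtain a b where ab: "a \<in> classes_of X f J" "b \<in> classes_of X f J" "a \<noteq> b" using L5 by blast
  then obtain x y where "x \<in> J" "y \<in> J" "a = rr``{x}" "b = rr``{y}" using ex by metis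
  then show "\<exists>x\<in>J. \<exists>y\<in>J. \<not> chain_rel X f x y" using ab eq_iff by blast
  show "\<forall>p\<in>J. \<forall>q\<in>J. chain_rel X f q p \<and> \<not> chain_rel X f p q \<longrightarrow>
          (\<exists>w\<in>J. chain_rel X f w p \<and> \<not> chain_rel X f p w \<and> chain_rel X f q w \<and> \<not> chain_rel X f w q)"
  proof (intro ballI impI)
    fix p q assume pq: "p \<in> J" "q \<in> J" "chain_rel X f q p \<and> \<not> chain_rel X f p q"
    then have "class_le X f (rr``{p}) (rr``{q})" "rr``{p} \<noteq> rr``{q}" using le_iff eq_iff by auto
    then obtain c where c: "c \<in> classes_of X f J" "class_le X f (rr``{p}) c" "rr``{p} \<noteq> c"
      "class_le X f c (rr``{q})" "c \<noteq> rr``{q}" using L6 mem[OF pq(1)] mem[OF pq(2)] by blast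
    then obtain w where w: "w \<in> J" "c = rr``{w}" using ex by blast
    show "\<exists>w\<in>J. chain_rel X f w p \<and> \<not> chain_rel X f p w \<and> chain_rel X f q w \<and> \<not> chain_rel X f w q"
      using c w pq le_iff eq_iff by (intro bexI[of _ w]) auto
  qed
qed

end



lemma no_J:
  fixes X :: "'a::metric_space set" and f :: "'a \<Rightarrow> 'a"
  assumes X: "compact X" and cont: "continuous_on X f" and J: "closed J" "J \<subseteq> chain_recurrent_set X f"
    and L: "linear_dense_order (classes_of X f J) (class_le X f)"
  shows False
proof -
  note pf = point_facts[OF J(2) L]
  have tot: "\<forall>p\<in>J. \<forall>q\<in>J. chain_rel X f p q \<or> chain_rel X f q p" by (rule pf(1))
  have dens: "\<And>p q. p \<in> J \<Longrightarrow> q \<in> J \<Longrightarrow> chain_rel X f q p \<Longrightarrow> \<not> chain_rel X f p q \<Longrightarrow>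
          (\<exists>w\<in>J. chain_rel X f w p \<and> \<not> chain_rel X f p w \<and> chain_rel X f q w \<and> \<not> chain_rel X f w q)"
    using pf(3) by blast
  have tr: "\<forall>a b c. chain_rel X f a b \<longrightarrow> chain_rel X f b c \<longrightarrow> chain_rel X f a c"
    using chain_rel_trans by blast
  have JX: "J \<subseteq> X" using J(2) unfolding chain_recurrent_set_def by auto
  have rfJ: "\<forall>a\<in>J. chain_rel X f a a" using J(2) unfolding chain_recurrent_set_def by auto
  obtain x y where xy: "x \<in> J" "y \<in> J" "\<not> chain_rel X f x y" using pf(2) by blast
  then obtain e where e: "e > 0" "\<not> eps_chain X f e x y" unfolding chain_rel_def by blast
  define R where "R = {z\<in>J. eps_chain X f e x z}"
  define S where "S = {z\<in>J. \<not> eps_chain X f e x z}"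
  have Rc: "closed R" unfolding R_def by (rule R_closed[OF X cont J])
  have Sc: "closed S" unfolding S_def by (rule R_compl_closed[OF J(1) JX])
  have RX: "R \<subseteq> X" "S \<subseteq> X" using JX unfolding R_def S_def by auto
  have "compact (X \<inter> R)" "compact (X \<inter> S)" using compact_Int_closed[OF X] Rc Sc by auto
  moreover have "X \<inter> R = R" "X \<inter> S = S" using RX by auto
  ultimately have Rk: "compact R" and Sk: "compact S" by auto
  have "eps_chain X f e x x" using rfJ xy e unfolding chain_rel_def by blast
  then have xR: "x \<in> R" unfolding R_def using xy by auto
  have yS: "y \<in> S" unfolding S_def using xy e by auto
  have RJ: "R \<subseteq> J" "S \<subseteq> J" unfolding R_def S_def by auto
  obtain zm where zm: "zm \<in> R" "\<forall>p\<in>R. chain_rel X f zm p"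
  proof -
    have "\<exists>z\<in>R. \<forall>p\<in>R. chain_rel X f z p"
    proof (rule compact_top[OF Rk])
      show "R \<noteq> {}" using xR by auto
      show "\<forall>a\<in>R. \<forall>b\<in>R. chain_rel X f a b \<or> chain_rel X f b a" using tot RJ by blast
      show "\<forall>a b c. chain_rel X f a b \<longrightarrow> chain_rel X f b c \<longrightarrow> chain_rel X f a c" by (rule tr)
      show "\<forall>a\<in>R. chain_rel X f a a" using rfJ RJ by blast
      show "closed {z. chain_rel X f z p}" for p by (rule closed_up[OF X cont])
    qed
    then show ?thesis using that by blast
  qed
  obtain zn where zn: "zn \<in> S" "\<forall>p\<in>S. chain_rel X f p zn"
  proof -
    have "\<exists>z\<in>S. \<forall>p\<in>S. (\<lambda>a b. chain_rel X f b a) z p"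
    proof (rule compact_top[OF Sk])
      show "S \<noteq> {}" using yS by auto
      show "\<forall>a\<in>S. \<forall>b\<in>S. chain_rel X f b a \<or> chain_rel X f a b" using tot RJ by blast
      show "\<forall>a b c. chain_rel X f b a \<longrightarrow> chain_rel X f c b \<longrightarrow> chain_rel X f c a" using tr by blast
      show "\<forall>a\<in>S. chain_rel X f a a" using rfJ RJ by blast
      show "closed {z. chain_rel X f p z}" for p by (rule closed_down[OF X])
    qed
    then show ?thesis using that by blast
  qed
  have down: "w \<in> R" if "z \<in> R" "w \<in> J" "chain_rel X f z w" for z w
  proof -
    have "eps_chain X f e x z" "eps_chain X f e z w" using that e unfolding R_def chain_rel_def by auto
    then show ?thesis using eps_chain_trans that unfolding R_def by blast
  qed
  have zmJ: "zm \<in> J" and znJ: "zn \<in> J" using zm zn RJ by auto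
  have n1: "\<not> chain_rel X f zm zn" using down[OF zm(1) znJ] zn(1) unfolding R_def S_def by auto
  then have n2: "chain_rel X f zn zm" using tot zmJ znJ by blast
  obtain w where w: "w \<in> J" "chain_rel X f w zm" "\<not> chain_rel X f zm w" "chain_rel X f zn w" "\<not> chain_rel X f w zn"
    using dens[OF zmJ znJ n2 n1] by blast
  show False
  proof (cases "w \<in> R")
    case True then show False using zm w by blast
  next
    case False
    then have "w \<in> S" using w unfolding R_def S_def by auto
    then show False using zn w by blast
  qed
qed

theorem theorem2p1:
  fixes X :: "'a::metric_space set" and f :: "'a \<Rightarrow> 'a"
  assumes "compact X" and "continuous_on X f" and "f ` X \<subseteq> X"
  shows "(\<not> (\<exists>J. closed J \<and> J \<subseteq> chain_recurrent_set X f \<and>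
              linear_dense_order (classes_of X f J) (class_le X f))) \<and>
         \<not> linear_dense_order (classes_of X f (chain_recurrent_set X f)) (class_le X f)"
proof
  show A: "\<not> (\<exists>J. closed J \<and> J \<subseteq> chain_recurrent_set X f \<and>
              linear_dense_order (classes_of X f J) (class_le X f))"
    using no_J[OF assms(1,2)] by blast
  show "\<not> linear_dense_order (classes_of X f (chain_recurrent_set X f)) (class_le X f)"
    using A CR_closed[OF assms(1,2)] by blast
qed

end
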